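(* Let $n,p_1,p_2\ge 1$, $p=p_1+p_2$, let $(A_k)_{k\ge 0}$ be a sequence of real $n\times n$ matrices, $C_1\in\mathbb{R}^{p_1\times n}$, $C_2\in\mathbb{R}^{p_2\times n}$, $C=\begin{pmatrix}C_1\\ C_2\end{pmatrix}$, $Q=Q^T>0$ ($n\times n$), and $R=R^T=\begin{pmatrix}R_{11}&R_{12}\\ R_{21}&R_{22}\end{pmatrix}>0$ ($p\times p$, with $R_{11}$ of size $p_1\times p_1$, $R_{22}$ of size $p_2\times p_2$). Fix $\lambda_1,\lambda_2\in[0,1]$. For $X=X^T\ge 0$ define $$g_{\lambda_1\lambda_2}(k,X)=A_kXA_k^T+Q-\lambda_1\lambda_2A_kXC^T(CXC^T+R)^{-1}CXA_k^T-\lambda_1(1-\lambda_2)A_kXC_1^T(C_1XC_1^T+R_{11})^{-1}C_1XA_k^T-(1-\lambda_1)\lambda_2A_kXC_2^T(C_2XC_2^T+R_{22})^{-1}C_2XA_k^T,$$ and for matrices $K\in\mathbb{R}^{n\times p}$, $K_1\in\mathbb{R}^{n\times p_1}$, $K_2\in\mathbb{R}^{n\times p_2}$ define $$\phi(k,K,K_1,K_2,X)=(1-\lambda_1)(1-\lambda_2)(A_kXA_k^T+Q)+\lambda_1\lambda_2\big((A_k+KC)X(A_k+KC)^T+Q+KRK^T\big)$$ $$+\lambda_1(1-\lambda_2)\big((A_k+K_1C_1)X(A_k+K_1C_1)^T+Q+K_1R_{11}K_1^T\big)+(1-\lambda_1)\lambda_2\big((A_k+K_2C_2)X(A_k+K_2C_2)^T+Q+K_2R_{22}K_2^T\big).$$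 Suppose there exist matrices $K_k\in\mathbb{R}^{n\times p}$, $K_{k,1}\in\mathbb{R}^{n\times p_1}$, $K_{k,2}\in\mathbb{R}^{n\times p_2}$ ($k\ge 0$) and a symmetric matrix $\bar P>0$ such that $\bar P>\phi(k,K_k,K_{k,1},K_{k,2},\bar P)$ for all $k\ge 0$. Then for every symmetric $P_0\ge 0$, the sequence defined by $P_{k+1}=g_{\lambda_1\lambda_2}(k,P_k)$ is bounded.
   Context: All matrix inequalities are in the Loewner (positive semidefinite) order: $M>N$ means $M-N$ is positive definite, $M\ge N$ means $M-N$ is positive semidefinite. The recursion $P_{k+1}=g_{\lambda_1\lambda_2}(k,P_k)$ is the covariance recursion of an extended Kalman filter whose two measurement channels (outputs $C_1x$, $C_2x$) deliver measurements with probabilities $\lambda_1,\lambda_2$, with $A_k$ the Jacobian of the dynamics at step $k$. *)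

theory Defs
  imports "HOL-Analysis.Analysis"
begin

definition psd_mat :: "real^'n^'n \<Rightarrow> bool" where
  "psd_mat M \<longleftrightarrow> transpose M = M \<and> (\<forall>x. 0 \<le> x \<bullet> (M *v x))"

definition pd_mat :: "real^'n^'n \<Rightarrow> bool" where
  "pd_mat M \<longleftrightarrow> transpose M = M \<and> (\<forall>x. x \<noteq> 0 \<longrightarrow> 0 < x \<bullet> (M *v x))"

definition stack_rows :: "real^'n^'p1::finite \<Rightarrow> real^'n^'p2::finite \<Rightarrow> real^'n^('p1 + 'p2)" where
  "stack_rows C1 C2 = (\<chi> i. case i of Inl a \<Rightarrow> C1 $ a | Inr b \<Rightarrow> C2 $ b)"

definition blk11 :: "real^('p1::finite + 'p2::finite)^('p1 + 'p2) \<Rightarrow> real^'p1^'p1" where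
  "blk11 R = (\<chi> i j. R $ Inl i $ Inl j)"

definition blk22 :: "real^('p1::finite + 'p2::finite)^('p1 + 'p2) \<Rightarrow> real^'p2^'p2" where
  "blk22 R = (\<chi> i j. R $ Inr i $ Inr j)"

definition gmap ::
  "(nat \<Rightarrow> real^'n^'n) \<Rightarrow> real^'n^'p1 \<Rightarrow> real^'n^'p2 \<Rightarrow> real^'n^'n
   \<Rightarrow> real^('p1 + 'p2)^('p1 + 'p2) \<Rightarrow> real \<Rightarrow> real \<Rightarrow> nat \<Rightarrow> real^'n^'n \<Rightarrow> real^'n^'n" where
  "gmap A C1 C2 Q R l1 l2 k X =
     (let C = stack_rows C1 C2; R11 = blk11 R; R22 = blk22 R; Ak = A k in
      Ak ** X ** transpose Ak + Q
      - (l1 * l2) *\<^sub>R (Ak ** X ** transpose C ** matrix_inv (C ** X ** transpose C + R)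
                         ** C ** X ** transpose Ak)
      - (l1 * (1 - l2)) *\<^sub>R (Ak ** X ** transpose C1 ** matrix_inv (C1 ** X ** transpose C1 + R11)
                         ** C1 ** X ** transpose Ak)
      - ((1 - l1) * l2) *\<^sub>R (Ak ** X ** transpose C2 ** matrix_inv (C2 ** X ** transpose C2 + R22)
                         ** C2 ** X ** transpose Ak))"

definition phimap ::
  "(nat \<Rightarrow> real^'n^'n) \<Rightarrow> real^'n^'p1 \<Rightarrow> real^'n^'p2 \<Rightarrow> real^'n^'n
   \<Rightarrow> real^('p1 + 'p2)^('p1 + 'p2) \<Rightarrow> real \<Rightarrow> real \<Rightarrow> nat
   \<Rightarrow> real^('p1 + 'p2)^'n \<Rightarrow> real^'p1^'n \<Rightarrow> real^'p2^'n \<Rightarrow> real^'n^'n \<Rightarrow> real^'n^'n" where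
  "phimap A C1 C2 Q R l1 l2 k K K1 K2 X =
     (let C = stack_rows C1 C2; R11 = blk11 R; R22 = blk22 R; Ak = A k in
      ((1 - l1) * (1 - l2)) *\<^sub>R (Ak ** X ** transpose Ak + Q)
      + (l1 * l2) *\<^sub>R ((Ak + K ** C) ** X ** transpose (Ak + K ** C) + Q + K ** R ** transpose K)
      + (l1 * (1 - l2)) *\<^sub>R ((Ak + K1 ** C1) ** X ** transpose (Ak + K1 ** C1) + Q
                                + K1 ** R11 ** transpose K1)
      + ((1 - l1) * l2) *\<^sub>R ((Ak + K2 ** C2) ** X ** transpose (Ak + K2 ** C2) + Q
                                + K2 ** R22 ** transpose K2))"

end

theory Submission
  imports Defs
begin


definition qf :: "real^'n^'n \<Rightarrow> real^'n \<Rightarrow> real" where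
  "qf M x = x \<bullet> (M *v x)"

lemma transpose_add: "transpose (A + B) = transpose A + transpose (B::real^'n^'m)"
  by (simp add: transpose_def vec_eq_iff)
lemma transpose_diff: "transpose (A - B) = transpose A - transpose (B::real^'n^'m)"
  by (simp add: transpose_def vec_eq_iff)

lemma dot_mv: "x \<bullet> ((M::real^'n^'m) *v y) = (transpose M *v x) \<bullet> y"
  by (metis dot_lmul_matrix transpose_matrix_vector)

lemma qf_sandwich: "qf (M ** X ** transpose N) x = (transpose M *v x) \<bullet> (X *v (transpose N *v x))"
  unfolding qf_def by (simp add: dot_mv flip: matrix_vector_mul_assoc)

lemma qf_add: "qf (A + B) x = qf A x + qf B x"
  by (simp add: qf_def matrix_vector_mult_add_rdistrib inner_add_right)
lemma qf_diff: "qf (A - B) x = qf A x - qf B x"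
  by (simp add: qf_def matrix_vector_mult_diff_rdistrib inner_diff_right)
lemma qf_scale: "qf (c *\<^sub>R A) x = c * qf A x"
  by (simp add: qf_def flip: scaleR_matrix_vector_assoc)

lemma pd_inv:
  fixes S :: "real^'n^'n"
  assumes "pd_mat S"
  shows "S ** matrix_inv S = mat 1" "matrix_inv S ** S = mat 1" "transpose (matrix_inv S) = matrix_inv S"
proof -
  have "\<forall>x. S *v x = 0 \<longrightarrow> x = 0"
    using assms unfolding pd_mat_def by (metis inner_zero_right less_irrefl)
  then have "invertible S"
    using matrix_left_invertible_ker invertible_left_inverse by blast
  then have *: "S ** matrix_inv S = mat 1 \<and> matrix_inv S ** S = mat 1"
    unfolding invertible_def matrix_inv_def by (rule someI_ex)
  then show "S ** matrix_inv S = mat 1" "matrix_inv S ** S = mat 1" by auto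
  have "transpose (matrix_inv S) ** S = mat 1"
    using * assms unfolding pd_mat_def
    by (metis matrix_transpose_mul transpose_mat)
  then have "transpose (matrix_inv S) = transpose (matrix_inv S) ** (S ** matrix_inv S)"
    using * by simp
  also have "\<dots> = matrix_inv S" by (simp add: matrix_mul_assoc \<open>transpose (matrix_inv S) ** S = mat 1\<close>)
  finally show "transpose (matrix_inv S) = matrix_inv S" .
qed

lemma dot_mv': "(transpose M *v x) \<bullet> y = x \<bullet> ((M::real^'n^'m) *v y)"
  by (simp add: dot_mv)

lemma S_pd:
  fixes X :: "real^'n^'n" and C :: "real^'n^'p" and Rr :: "real^'p^'p"
  assumes XT: "transpose X = X" and Xpsd: "\<forall>z. 0 \<le> z \<bullet> (X *v z)" and Rpd: "pd_mat Rr"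
  shows "pd_mat (C ** X ** transpose C + Rr)"
proof -
  have "transpose (C ** X ** transpose C + Rr) = C ** X ** transpose C + Rr"
    using XT Rpd by (simp add: pd_mat_def transpose_add matrix_transpose_mul matrix_mul_assoc)
  moreover have "0 < v \<bullet> ((C ** X ** transpose C + Rr) *v v)" if "v \<noteq> 0" for v
  proof -
    have "v \<bullet> ((C ** X ** transpose C + Rr) *v v) = qf (C ** X ** transpose C) v + qf Rr v"
      by (simp add: qf_add flip: qf_def)
    moreover have "qf (C ** X ** transpose C) v \<ge> 0" using Xpsd by (simp add: qf_sandwich)
    moreover have "qf Rr v > 0" using Rpd that by (simp add: qf_def pd_mat_def)
    ultimately show ?thesis by linarith
  qed
  ultimately show ?thesis unfolding pd_mat_def by blast
qed

lemma core:
  fixes X :: "real^'n^'n" and C :: "real^'n^'p" and Rr :: "real^'p^'p" and y :: "real^'n" and v :: "real^'p"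
  assumes XT: "transpose X = X" and Xpsd: "\<forall>z. 0 \<le> z \<bullet> (X *v z)" and Rpd: "pd_mat Rr"
  defines "S \<equiv> C ** X ** transpose C + Rr"
  defines "w \<equiv> C *v (X *v y)"
  shows "y \<bullet> (X *v y) - w \<bullet> (matrix_inv S *v w)
           \<le> (y + transpose C *v v) \<bullet> (X *v (y + transpose C *v v)) + v \<bullet> (Rr *v v)"
    and "0 \<le> y \<bullet> (X *v y) - w \<bullet> (matrix_inv S *v w)"
proof -
  have Spd: "pd_mat S" unfolding S_def using S_pd[OF XT Xpsd Rpd] .
  note inv = pd_inv[OF Spd]
  have ST: "transpose S = S" using Spd by (simp add: pd_mat_def)
  have E: "(y + transpose C *v u) \<bullet> (X *v (y + transpose C *v u)) + u \<bullet> (Rr *v u)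
     = y \<bullet> (X *v y) + 2 * (u \<bullet> w) + u \<bullet> (S *v u)" for u
  proof -
    have a: "(transpose C *v u) \<bullet> (X *v y) = u \<bullet> w"
      unfolding w_def by (rule dot_mv')
    have b: "y \<bullet> (X *v (transpose C *v u)) = u \<bullet> w"
      by (metis a XT dot_mv inner_commute)
    have c: "(transpose C *v u) \<bullet> (X *v (transpose C *v u)) = u \<bullet> ((C ** X ** transpose C) *v u)"
      by (metis dot_mv' matrix_vector_mul_assoc)
    show ?thesis
      unfolding S_def
      by (simp only: matrix_vector_right_distrib matrix_vector_mult_add_rdistrib inner_add_left
          inner_add_right a b c)
  qed
  have F: "(u + matrix_inv S *v w) \<bullet> (S *v (u + matrix_inv S *v w))
      = u \<bullet> (S *v u) + 2 * (u \<bullet> w) + w \<bullet> (matrix_inv S *v w)" for u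
  proof -
    have a: "S *v (matrix_inv S *v w) = w"
      by (simp add: matrix_vector_mul_assoc inv)
    have b: "(matrix_inv S *v w) \<bullet> (S *v u) = u \<bullet> w"
      by (metis a ST dot_mv inner_commute)
    show ?thesis
      by (simp only: matrix_vector_right_distrib inner_add_left inner_add_right a b) (simp add: inner_commute)
  qed
  have G: "0 \<le> z \<bullet> (S *v z)" for z
    using Spd unfolding pd_mat_def by (cases "z = 0") (auto intro: less_imp_le)
  have H: "0 \<le> (y + transpose C *v u) \<bullet> (X *v (y + transpose C *v u)) + u \<bullet> (Rr *v u)" for u
  proof -
    have "0 \<le> u \<bullet> (Rr *v u)"
      using Rpd unfolding pd_mat_def by (cases "u = 0") (auto intro: less_imp_le)
    then show ?thesis using Xpsd by (meson add_nonneg_nonneg)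
  qed
  show "y \<bullet> (X *v y) - w \<bullet> (matrix_inv S *v w)
           \<le> (y + transpose C *v v) \<bullet> (X *v (y + transpose C *v v)) + v \<bullet> (Rr *v v)"
    using E[of v] F[of v] G[of "v + matrix_inv S *v w"] by linarith
  have "y \<bullet> (X *v y) - w \<bullet> (matrix_inv S *v w) = 
     (y + transpose C *v u) \<bullet> (X *v (y + transpose C *v u)) + u \<bullet> (Rr *v u)"
    if "u = - (matrix_inv S *v w)" for u
    using E[of u] F[of u] that by simp
  then show "0 \<le> y \<bullet> (X *v y) - w \<bullet> (matrix_inv S *v w)" using H by metis
qed

lemma sum_UNIV_Plus:
  "sum f (UNIV :: ('a::finite + 'b::finite) set) = (\<Sum>a\<in>UNIV. f (Inl a)) + (\<Sum>b\<in>UNIV. f (Inr b))"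
  by (subst UNIV_Plus_UNIV[symmetric], subst sum.Plus) auto

lemma sym_entry: assumes "transpose (R::real^'n^'n) = R" shows "R $ i $ j = R $ j $ i"
proof -
  have "transpose R $ i $ j = R $ i $ j" using assms by simp
  then show ?thesis by (simp add: transpose_def)
qed

lemma blk11_T:
  fixes R :: "real^('p1::finite + 'p2::finite)^('p1 + 'p2)"
  assumes "transpose R = R" shows "transpose (blk11 R) = blk11 R"
  unfolding blk11_def transpose_def vec_eq_iff using sym_entry[OF assms] by simp

lemma mv_sum_type:
  fixes R :: "real^('p1::finite + 'p2::finite)^('p1 + 'p2)"
  shows "(R *v y) $ i = (\<Sum>a\<in>UNIV. R $ i $ Inl a * y $ Inl a) + (\<Sum>b\<in>UNIV. R $ i $ Inr b * y $ Inr b)"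
  unfolding matrix_vector_mult_def by (subst sum_UNIV_Plus) simp
lemma inner_sum_type:
  fixes a b :: "real^('p1::finite + 'p2::finite)"
  shows "a \<bullet> b = (\<Sum>i\<in>UNIV. a $ Inl i * b $ Inl i) + (\<Sum>j\<in>UNIV. a $ Inr j * b $ Inr j)"
  unfolding inner_vec_def by (subst sum_UNIV_Plus) simp

lemma blk22_T:
  fixes R :: "real^('p1::finite + 'p2::finite)^('p1 + 'p2)"
  assumes "transpose R = R" shows "transpose (blk22 R) = blk22 R"
  unfolding blk22_def transpose_def vec_eq_iff using sym_entry[OF assms] by simp

lemma blk11_pd:
  fixes R :: "real^('p1::finite + 'p2::finite)^('p1 + 'p2)"
  assumes "pd_mat R" shows "pd_mat (blk11 R)"
  unfolding pd_mat_def
proof (intro conjI allI impI)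
  show "transpose (blk11 R) = blk11 R"
    using assms blk11_T unfolding pd_mat_def by blast
next
  fix x :: "real^'p1" assume "x \<noteq> 0"
  define y :: "real^('p1 + 'p2)" where "y = (\<chi> i. case i of Inl a \<Rightarrow> x $ a | Inr b \<Rightarrow> 0)"
  have "y \<noteq> 0" using \<open>x \<noteq> 0\<close> unfolding y_def by (auto simp: vec_eq_iff) (metis sum.case)
  then have "0 < y \<bullet> (R *v y)" using assms unfolding pd_mat_def by blast
  also have "y \<bullet> (R *v y) = x \<bullet> (blk11 R *v x)"
    unfolding inner_sum_type mv_sum_type
    by (simp add: y_def matrix_vector_mult_def blk11_def inner_vec_def)
  finally show "0 < x \<bullet> (blk11 R *v x)" .
qed

lemma blk22_pd:
  fixes R :: "real^('p1::finite + 'p2::finite)^('p1 + 'p2)"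
  assumes "pd_mat R" shows "pd_mat (blk22 R)"
  unfolding pd_mat_def
proof (intro conjI allI impI)
  show "transpose (blk22 R) = blk22 R"
    using assms blk22_T unfolding pd_mat_def by blast
next
  fix x :: "real^'p2" assume "x \<noteq> 0"
  define y :: "real^('p1 + 'p2)" where "y = (\<chi> i. case i of Inl a \<Rightarrow> 0 | Inr b \<Rightarrow> x $ b)"
  have "y \<noteq> 0" using \<open>x \<noteq> 0\<close> unfolding y_def by (auto simp: vec_eq_iff) (metis sum.case)
  then have "0 < y \<bullet> (R *v y)" using assms unfolding pd_mat_def by blast
  also have "y \<bullet> (R *v y) = x \<bullet> (blk22 R *v x)"
    unfolding inner_sum_type mv_sum_type
    by (simp add: y_def matrix_vector_mult_def blk22_def inner_vec_def)
  finally show "0 < x \<bullet> (blk22 R *v x)" .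
qed


definition hterm :: "real^'n^'p \<Rightarrow> real^'p^'p \<Rightarrow> real^'n^'n \<Rightarrow> real^'n \<Rightarrow> real" where
  "hterm C Rr X y = (C *v (X *v y)) \<bullet> (matrix_inv (C ** X ** transpose C + Rr) *v (C *v (X *v y)))"

lemma qf_T:
  fixes Ak X :: "real^'n^'n" and C :: "real^'n^'p" and Si :: "real^'p^'p"
  assumes XT: "transpose X = X"
  shows "qf (Ak ** X ** transpose C ** Si ** C ** X ** transpose Ak) x
     = (C *v (X *v (transpose Ak *v x))) \<bullet> (Si *v (C *v (X *v (transpose Ak *v x))))"
proof -
  define w where "w = C *v (X *v (transpose Ak *v x))"
  have "qf (Ak ** X ** transpose C ** Si ** C ** X ** transpose Ak) x
     = x \<bullet> (Ak *v (X *v (transpose C *v (Si *v w))))"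
    unfolding qf_def w_def by (simp only: matrix_vector_mul_assoc[symmetric])
  also have "\<dots> = (transpose Ak *v x) \<bullet> (X *v (transpose C *v (Si *v w)))"
    by (rule dot_mv)
  also have "\<dots> = (transpose X *v (transpose Ak *v x)) \<bullet> (transpose C *v (Si *v w))"
    by (rule dot_mv)
  also have "\<dots> = w \<bullet> (Si *v w)"
    unfolding XT w_def by (metis dot_mv transpose_transpose)
  finally show ?thesis unfolding w_def .
qed

lemma T_sym:
  fixes Ak X :: "real^'n^'n" and C :: "real^'n^'p" and Si :: "real^'p^'p"
  assumes "transpose X = X" "transpose Si = Si"
  shows "transpose (Ak ** X ** transpose C ** Si ** C ** X ** transpose Ak)
       = Ak ** X ** transpose C ** Si ** C ** X ** transpose Ak"
  using assms by (simp add: matrix_transpose_mul matrix_mul_assoc)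

lemma chan:
  fixes X :: "real^'n^'n" and C :: "real^'n^'p" and Rr :: "real^'p^'p" and K :: "real^'p^'n"
  assumes XT: "transpose X = X" and Xpsd: "\<forall>z. 0 \<le> z \<bullet> (X *v z)" and Rpd: "pd_mat Rr"
  shows "qf X (transpose Ak *v x) - hterm C Rr X (transpose Ak *v x)
           \<le> qf X (transpose (Ak + K ** C) *v x) + qf Rr (transpose K *v x)"
    and "0 \<le> qf X (transpose Ak *v x) - hterm C Rr X (transpose Ak *v x)"
proof -
  have e: "transpose (Ak + K ** C) *v x = transpose Ak *v x + transpose C *v (transpose K *v x)"
    by (simp only: transpose_add matrix_transpose_mul matrix_vector_mult_add_rdistrib matrix_vector_mul_assoc)
  show "qf X (transpose Ak *v x) - hterm C Rr X (transpose Ak *v x)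
           \<le> qf X (transpose (Ak + K ** C) *v x) + qf Rr (transpose K *v x)"
    unfolding e qf_def hterm_def by (rule core(1)[OF XT Xpsd Rpd])
  show "0 \<le> qf X (transpose Ak *v x) - hterm C Rr X (transpose Ak *v x)"
    unfolding qf_def hterm_def by (rule core(2)[OF XT Xpsd Rpd])
qed

lemma gmap_qf:
  assumes XT: "transpose X = X"
  shows "qf (gmap A C1 C2 Q R l1 l2 k X) x = qf X (transpose (A k) *v x) + qf Q x
     - (l1 * l2) * hterm (stack_rows C1 C2) R X (transpose (A k) *v x)
     - (l1 * (1 - l2)) * hterm C1 (blk11 R) X (transpose (A k) *v x)
     - ((1 - l1) * l2) * hterm C2 (blk22 R) X (transpose (A k) *v x)"
  unfolding gmap_def Let_def
  by (simp only: qf_add qf_diff qf_scale qf_T[OF XT] qf_sandwich[of "A k" X "A k"] hterm_def) (simp add: qf_def)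

lemma phimap_qf:
  "qf (phimap A C1 C2 Q R l1 l2 k K K1 K2 X) x =
     ((1 - l1) * (1 - l2) + l1 * l2 + l1 * (1 - l2) + (1 - l1) * l2) * qf Q x
     + (l1 * l2) * qf R (transpose K *v x) + (l1 * (1 - l2)) * qf (blk11 R) (transpose K1 *v x)
     + ((1 - l1) * l2) * qf (blk22 R) (transpose K2 *v x)
     + ((1 - l1) * (1 - l2)) * qf X (transpose (A k) *v x)
     + (l1 * l2) * qf X (transpose (A k + K ** stack_rows C1 C2) *v x)
     + (l1 * (1 - l2)) * qf X (transpose (A k + K1 ** C1) *v x)
     + ((1 - l1) * l2) * qf X (transpose (A k + K2 ** C2) *v x)"
  unfolding phimap_def Let_def
  by (simp only: qf_add qf_scale qf_sandwich) (simp add: qf_def algebra_simps)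

lemma psd_qf: "psd_mat X \<Longrightarrow> 0 \<le> qf X x"
  unfolding psd_mat_def qf_def by blast

lemma pd_qf: "pd_mat X \<Longrightarrow> 0 \<le> qf X x"
  unfolding pd_mat_def qf_def by (cases "x = 0") (auto intro: less_imp_le)

lemma gmap_props:
  fixes R :: "real^('p1::finite + 'p2::finite)^('p1 + 'p2)" and X :: "real^'n^'n"
  assumes Q: "pd_mat Q" and R: "pd_mat R" and l: "0 \<le> l1" "l1 \<le> 1" "0 \<le> l2" "l2 \<le> 1"
    and X: "psd_mat X"
  shows "psd_mat (gmap A C1 C2 Q R l1 l2 k X)"
    and "qf (gmap A C1 C2 Q R l1 l2 k X) x \<le> qf (phimap A C1 C2 Q R l1 l2 k K K1 K2 X) x"
proof -
  have XT: "transpose X = X" and Xp: "\<forall>z. 0 \<le> z \<bullet> (X *v z)" using X by (auto simp: psd_mat_def)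
  have R1: "pd_mat (blk11 R)" and R2: "pd_mat (blk22 R)" using R blk11_pd blk22_pd by auto
  have w: "0 \<le> l1 * l2" "0 \<le> l1 * (1 - l2)" "0 \<le> (1 - l1) * l2" "0 \<le> (1 - l1) * (1 - l2)"
    using l by auto
  have ws: "(1 - l1) * (1 - l2) + l1 * l2 + l1 * (1 - l2) + (1 - l1) * l2 = 1"
    by (simp add: algebra_simps)
  have qfq: "0 \<le> qf Q z" for z using pd_qf[OF Q] .
  show "qf (gmap A C1 C2 Q R l1 l2 k X) x \<le> qf (phimap A C1 C2 Q R l1 l2 k K K1 K2 X) x"
  proof -
    note c1 = chan(1)[OF XT Xp R, of "A k" x "stack_rows C1 C2" K]
    note c2 = chan(1)[OF XT Xp R1, of "A k" x C1 K1]
    note c3 = chan(1)[OF XT Xp R2, of "A k" x C2 K2]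
    note m1 = mult_left_mono[OF c1 w(1)]
    note m2 = mult_left_mono[OF c2 w(2)]
    note m3 = mult_left_mono[OF c3 w(3)]
    show ?thesis unfolding gmap_qf[OF XT] phimap_qf ws
      using m1 m2 m3 by (simp add: algebra_simps)
  qed
  have nn: "0 \<le> qf (gmap A C1 C2 Q R l1 l2 k X) z" for z
  proof -
    note c1 = chan(2)[OF XT Xp R, of "A k" z "stack_rows C1 C2"]
    note c2 = chan(2)[OF XT Xp R1, of "A k" z C1]
    note c3 = chan(2)[OF XT Xp R2, of "A k" z C2]
    have x0: "0 \<le> qf X (transpose (A k) *v z)" using Xp by (simp add: qf_def)
    have "qf (gmap A C1 C2 Q R l1 l2 k X) z = qf Q z
       + ((1 - l1) * (1 - l2)) * qf X (transpose (A k) *v z)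
       + (l1 * l2) * (qf X (transpose (A k) *v z) - hterm (stack_rows C1 C2) R X (transpose (A k) *v z))
       + (l1 * (1 - l2)) * (qf X (transpose (A k) *v z) - hterm C1 (blk11 R) X (transpose (A k) *v z))
       + ((1 - l1) * l2) * (qf X (transpose (A k) *v z) - hterm C2 (blk22 R) X (transpose (A k) *v z))"
      unfolding gmap_qf[OF XT] using ws by (simp add: algebra_simps)
    also have "0 \<le> \<dots>"
      using qfq[of z] mult_nonneg_nonneg[OF w(4) x0] mult_nonneg_nonneg[OF w(1) c1]
        mult_nonneg_nonneg[OF w(2) c2] mult_nonneg_nonneg[OF w(3) c3] by linarith
    finally show ?thesis .
  qed
  have Si: "transpose (matrix_inv (C ** X ** transpose C + Rr)) = matrix_inv (C ** X ** transpose C + Rr)"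
    if "pd_mat Rr" for C :: "real^'n^'p" and Rr
    using pd_inv(3)[OF S_pd[OF XT Xp that]] .
  have QT: "transpose Q = Q" using Q by (simp add: pd_mat_def)
  have "transpose (gmap A C1 C2 Q R l1 l2 k X) = gmap A C1 C2 Q R l1 l2 k X"
    unfolding gmap_def Let_def
    by (simp only: transpose_add transpose_diff transpose_scalar T_sym[OF XT Si[OF R]]
        T_sym[OF XT Si[OF R1]] T_sym[OF XT Si[OF R2]] QT) (simp add: matrix_transpose_mul XT matrix_mul_assoc)
  then show "psd_mat (gmap A C1 C2 Q R l1 l2 k X)"
    using nn unfolding psd_mat_def qf_def by blast
qed


lemma phi_mono:
  fixes R :: "real^('p1::finite + 'p2::finite)^('p1 + 'p2)" and X Y :: "real^'n^'n"
  assumes Q: "pd_mat Q" and R: "pd_mat R" and l: "0 \<le> l1" "l1 \<le> 1" "0 \<le> l2" "l2 \<le> 1"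
    and XY: "\<forall>z. qf X z \<le> M * qf Y z" and M: "1 \<le> M"
  shows "qf (phimap A C1 C2 Q R l1 l2 k K K1 K2 X) x \<le> M * qf (phimap A C1 C2 Q R l1 l2 k K K1 K2 Y) x"
proof -
  have R1: "pd_mat (blk11 R)" and R2: "pd_mat (blk22 R)" using R blk11_pd blk22_pd by auto
  have w: "0 \<le> l1 * l2" "0 \<le> l1 * (1 - l2)" "0 \<le> (1 - l1) * l2" "0 \<le> (1 - l1) * (1 - l2)"
    using l by auto
  define c where "c = ((1 - l1) * (1 - l2) + l1 * l2 + l1 * (1 - l2) + (1 - l1) * l2) * qf Q x
     + (l1 * l2) * qf R (transpose K *v x) + (l1 * (1 - l2)) * qf (blk11 R) (transpose K1 *v x)
     + ((1 - l1) * l2) * qf (blk22 R) (transpose K2 *v x)"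
  have c0: "0 \<le> c" unfolding c_def
    using w pd_qf[OF Q] pd_qf[OF R] pd_qf[OF R1] pd_qf[OF R2] l
    by (intro add_nonneg_nonneg mult_nonneg_nonneg) auto
  have cM: "c \<le> M * c" using c0 M by (simp add: mult_right_mono[OF M c0, simplified])
  have t: "a * qf X u \<le> M * (a * qf Y u)" if "0 \<le> a" for a u
    using mult_left_mono[OF XY[rule_format, of u] that] by (simp add: algebra_simps)
  show ?thesis
    unfolding phimap_qf c_def[symmetric]
    using cM t[OF w(4), of "transpose (A k) *v x"] t[OF w(1), of "transpose (A k + K ** stack_rows C1 C2) *v x"]
      t[OF w(2), of "transpose (A k + K1 ** C1) *v x"] t[OF w(3), of "transpose (A k + K2 ** C2) *v x"]
    by (simp add: algebra_simps)
qed

lemma entry_inner: "(X::real^'n^'n) $ i $ j = axis i 1 \<bullet> (X *v axis j 1)"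
proof -
  have "axis i 1 \<bullet> (X *v axis j 1) = (X *v axis j 1) $ i" by (simp add: cart_eq_inner_axis inner_commute)
  then show ?thesis by (simp add: matrix_vector_mult_basis column_def)
qed

lemma entry_bound:
  fixes X :: "real^'n^'n"
  assumes XT: "transpose X = X" and Xp: "\<forall>z. 0 \<le> qf X z"
  shows "\<bar>u \<bullet> (X *v v)\<bar> \<le> (qf X (u + v) + qf X (u - v)) / 4"
proof -
  have s: "v \<bullet> (X *v u) = u \<bullet> (X *v v)" by (metis XT dot_mv inner_commute)
  have p: "qf X (u + v) = qf X u + 2 * (u \<bullet> (X *v v)) + qf X v"
    unfolding qf_def using s by (simp add: matrix_vector_right_distrib inner_add_left inner_add_right)
  have m: "qf X (u - v) = qf X u - 2 * (u \<bullet> (X *v v)) + qf X v"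
    unfolding qf_def using s by (simp add: matrix_vector_mult_diff_distrib inner_diff_left inner_diff_right)
  show ?thesis using p m Xp[rule_format, of "u+v"] Xp[rule_format, of "u-v"] Xp[rule_format, of u]
    Xp[rule_format, of v] by (simp add: abs_le_iff)
qed

lemma pd_lower:
  fixes P :: "real^'n^'n"
  assumes "pd_mat P"
  shows "\<exists>m>0. \<forall>x. m * (norm x)\<^sup>2 \<le> qf P x"
proof -
  have cont: "continuous_on (sphere 0 1) (\<lambda>x::real^'n. x \<bullet> (P *v x))"
    by (intro continuous_intros)
  have ne: "sphere (0::real^'n) 1 \<noteq> {}" by simp
  obtain x0 where x0: "x0 \<in> sphere 0 1" and mn: "\<forall>y\<in>sphere 0 1. x0 \<bullet> (P *v x0) \<le> y \<bullet> (P *v y)"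
    using continuous_attains_inf[OF compact_sphere ne cont] by blast
  have "x0 \<noteq> 0" using x0 by auto
  then have pos: "0 < x0 \<bullet> (P *v x0)" using assms unfolding pd_mat_def by blast
  have "x0 \<bullet> (P *v x0) * (norm x)\<^sup>2 \<le> qf P x" for x
  proof (cases "x = 0")
    case True then show ?thesis by (simp add: qf_def)
  next
    case False
    define u where "u = (1 / norm x) *\<^sub>R x"
    have u: "u \<in> sphere 0 1" using False by (simp add: u_def)
    have xu: "x = norm x *\<^sub>R u" using False by (simp add: u_def)
    have "qf P x = (norm x)\<^sup>2 * (u \<bullet> (P *v u))"
      unfolding qf_def by (subst (1 2) xu) (simp add: power2_eq_square matrix_vector_mult_scaleR)
    moreover have "x0 \<bullet> (P *v x0) \<le> u \<bullet> (P *v u)" using mn u by blast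
    ultimately show ?thesis by (metis mult.commute mult_right_mono zero_le_power2)
  qed
  then show ?thesis using pos by blast
qed

lemma psd_upper:
  fixes P :: "real^'n^'n"
  shows "\<exists>B>0. \<forall>x. qf P x \<le> B * (norm x)\<^sup>2"
proof -
  obtain B where B: "B > 0" "\<forall>x. norm (P *v x) \<le> norm x * B"
    using bounded_linear.pos_bounded[OF matrix_vector_mul_bounded_linear[of P]] by blast
  have "qf P x \<le> B * (norm x)\<^sup>2" for x
  proof -
    have "qf P x \<le> norm x * norm (P *v x)" unfolding qf_def by (rule norm_cauchy_schwarz)
    also have "\<dots> \<le> norm x * (norm x * B)" using B by (simp add: mult_left_mono)
    finally show ?thesis by (simp add: power2_eq_square algebra_simps)
  qed
  then show ?thesis using B by blast
qed


theorem lemma2: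
  fixes A :: "nat \<Rightarrow> real^'n^'n"
    and C1 :: "real^'n^'p1" and C2 :: "real^'n^'p2"
    and Q :: "real^'n^'n" and R :: "real^('p1 + 'p2)^('p1 + 'p2)"
    and l1 l2 :: real
    and Kk :: "nat \<Rightarrow> real^('p1 + 'p2)^'n"
    and Kk1 :: "nat \<Rightarrow> real^'p1^'n" and Kk2 :: "nat \<Rightarrow> real^'p2^'n"
    and Pbar P0 :: "real^'n^'n"
    and P :: "nat \<Rightarrow> real^'n^'n"
  assumes "pd_mat Q" and "pd_mat R"
    and "0 \<le> l1" "l1 \<le> 1" "0 \<le> l2" "l2 \<le> 1"
    and "pd_mat Pbar"
    and "\<And>k. pd_mat (Pbar - phimap A C1 C2 Q R l1 l2 k (Kk k) (Kk1 k) (Kk2 k) Pbar)"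
    and "psd_mat P0"
    and "P 0 = P0"
    and "\<And>k. P (Suc k) = gmap A C1 C2 Q R l1 l2 k (P k)"
  shows "bounded (range P)"
proof -
  note Q = assms(1) and R = assms(2) and l = assms(3-6)
  obtain m where m: "m > 0" "\<forall>x. m * (norm x)\<^sup>2 \<le> qf Pbar x"
    using pd_lower[OF assms(7)] by blast
  obtain B where B: "B > 0" "\<forall>x. qf P0 x \<le> B * (norm x)\<^sup>2"
    using psd_upper by blast
  define M where "M = max 1 (B / m)"
  have M1: "1 \<le> M" unfolding M_def by simp
  have P0b: "qf P0 x \<le> M * qf Pbar x" for x
  proof -
    have "qf P0 x \<le> B * (norm x)\<^sup>2" using B by blast
    also have "\<dots> = (B / m) * (m * (norm x)\<^sup>2)" using m by simp
    also have "\<dots> \<le> M * (m * (norm x)\<^sup>2)"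
      unfolding M_def using m by (intro mult_right_mono) auto
    also have "\<dots> \<le> M * qf Pbar x" using m M1 by (intro mult_left_mono) auto
    finally show ?thesis .
  qed
  have phiP: "qf (phimap A C1 C2 Q R l1 l2 k (Kk k) (Kk1 k) (Kk2 k) Pbar) x \<le> qf Pbar x" for k x
    using pd_qf[OF assms(8)[of k], of x] by (simp add: qf_diff)
  have inv: "psd_mat (P k) \<and> (\<forall>x. qf (P k) x \<le> M * qf Pbar x)" for k
  proof (induction k)
    case 0 then show ?case using assms(9,10) P0b by simp
  next
    case (Suc k)
    then have ps: "psd_mat (P k)" and bd: "\<forall>x. qf (P k) x \<le> M * qf Pbar x" by auto
    have "psd_mat (P (Suc k))" unfolding assms(11) by (rule gmap_props(1)[OF Q R l ps])
    moreover have "qf (P (Suc k)) x \<le> M * qf Pbar x" for x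
    proof -
      have "qf (P (Suc k)) x \<le> qf (phimap A C1 C2 Q R l1 l2 k (Kk k) (Kk1 k) (Kk2 k) (P k)) x"
        unfolding assms(11) by (rule gmap_props(2)[OF Q R l ps])
      also have "\<dots> \<le> M * qf (phimap A C1 C2 Q R l1 l2 k (Kk k) (Kk1 k) (Kk2 k) Pbar) x"
        by (rule phi_mono[OF Q R l bd M1])
      also have "\<dots> \<le> M * qf Pbar x" using phiP M1 by (intro mult_left_mono) auto
      finally show ?thesis .
    qed
    ultimately show ?case by blast
  qed
  define b where "b i j = M * (qf Pbar (axis i 1 + axis j 1) + qf Pbar (axis i 1 - axis j 1)) / 4" for i j :: 'n
  have ent: "\<bar>P k $ i $ j\<bar> \<le> b i j" for k i j
  proof -
    have ps: "psd_mat (P k)" and bd: "\<forall>x. qf (P k) x \<le> M * qf Pbar x" using inv by auto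
    have XT: "transpose (P k) = P k" using ps by (simp add: psd_mat_def)
    have "\<bar>P k $ i $ j\<bar> \<le> (qf (P k) (axis i 1 + axis j 1) + qf (P k) (axis i 1 - axis j 1)) / 4"
      unfolding entry_inner using entry_bound[OF XT] psd_qf[OF ps] by blast
    also have "\<dots> \<le> b i j" unfolding b_def using bd[rule_format, of "axis i 1 + axis j 1"]
      bd[rule_format, of "axis i 1 - axis j 1"] by (simp add: algebra_simps)
    finally show ?thesis .
  qed
  have "norm (P k) \<le> (\<Sum>i\<in>UNIV. \<Sum>j\<in>UNIV. b i j)" for k
  proof -
    have "norm (P k) \<le> (\<Sum>i\<in>UNIV. norm (P k $ i))" unfolding norm_vec_def by (rule L2_set_le_sum) simp
    also have "\<dots> \<le> (\<Sum>i\<in>UNIV. \<Sum>j\<in>UNIV. \<bar>P k $ i $ j\<bar>)"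
      by (intro sum_mono norm_le_l1_cart)
    also have "\<dots> \<le> (\<Sum>i\<in>UNIV. \<Sum>j\<in>UNIV. b i j)"
      by (intro sum_mono ent)
    finally show ?thesis .
  qed
  then show ?thesis unfolding bounded_iff by blast
qed

end
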